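(* Let $N\ge 2$ and $T\ge 1$, and let $U$ be any unitary on the Hilbert space with orthonormal basis $\{|z;i,i'\rangle : z,i,i'\ge 0\text{ integers}\}$. For a permutation $\sigma$ of $\{0,\dots,N-1\}$ let $O_\sigma|z;i,i'\rangle=(-1)^{m_{ii'}}|z;i,i'\rangle$, where for $0\le i,i'<N$, $m_{ii'}=1$ if $\sigma(i)<\sigma(i')$ and $0$ otherwise, and let $|\psi_\sigma^j\rangle=(UO_\sigma)^jU|0\rangle$. For integers $0\le k\le N-2$ and $1\le d\le N-1-k$ let $\sigma^{(k,d)}=(k,k+1,\dots,k+d)\circ\sigma$, where $(k,k+1,\dots,k+d)$ is the cyclic permutation $k\mapsto k+1\mapsto\dots\mapsto k+d\mapsto k$ (fixing all other points) and $\circ$ denotes composition with $\sigma$ applied first. Define $\omega(\sigma,\tau)=1/d$ if $\tau=\sigma^{(k,d)}$ for some such $k,d$, and $\omega(\sigma,\tau)=0$ otherwise, and $$W_j=\sum_{\sigma,\tau}\omega(\sigma,\tau)\langle\psi_\sigma^j|\psi_\tau^j\rangle,$$ the sum over all pairs of permutations of $\{0,\dots,N-1\}$. Then for every $j$ with $0\le j<T$, $|W_j-W_{j+1}|\le 2\pi\,N!$. *)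

theory Defs
  imports "HOL-Analysis.Analysis" "HOL-Combinatorics.Permutations"
begin

(* Hilbert space with orthonormal basis |z;i,i'> (z,i,i' natural numbers),
  realised as square-summable functions on nat \<times> nat \<times> nat. *)

type_synonym qstate = "nat \<times> nat \<times> nat \<Rightarrow> complex"

definition ell2 :: "qstate set" where
  "ell2 = {f. (\<lambda>x. (cmod (f x))\<^sup>2) summable_on UNIV}"

definition ipl2 :: "qstate \<Rightarrow> qstate \<Rightarrow> complex" where
  "ipl2 f g = (\<Sum>\<^sub>\<infinity>x. cnj (f x) * g x)"

definition unitary_op :: "(qstate \<Rightarrow> qstate) \<Rightarrow> bool" where
  "unitary_op U \<longleftrightarrow>
     (\<forall>f\<in>ell2. U f \<in> ell2) \<and>
     (\<forall>f\<in>ell2. \<forall>g\<in>ell2. U (\<lambda>x. f x + g x) = (\<lambda>x. U f x + U g x)) \<and>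
     (\<forall>c. \<forall>f\<in>ell2. U (\<lambda>x. c * f x) = (\<lambda>x. c * U f x)) \<and>
     (\<forall>f\<in>ell2. \<forall>g\<in>ell2. ipl2 (U f) (U g) = ipl2 f g) \<and>
     U ` ell2 = ell2"

definition ket0 :: qstate where
  "ket0 = (\<lambda>x. if x = (0, 0, 0) then 1 else 0)"

definition phase_op :: "nat \<Rightarrow> (nat \<Rightarrow> nat) \<Rightarrow> qstate \<Rightarrow> qstate" where
  "phase_op N \<sigma> f = (\<lambda>(z, i, i').
     (if i < N \<and> i' < N \<and> \<sigma> i < \<sigma> i' then -1 else 1) * f (z, i, i'))"

definition psi :: "nat \<Rightarrow> (qstate \<Rightarrow> qstate) \<Rightarrow> (nat \<Rightarrow> nat) \<Rightarrow> nat \<Rightarrow> qstate" where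
  "psi N U \<sigma> j = ((U \<circ> phase_op N \<sigma>) ^^ j) (U ket0)"

definition cyc :: "nat \<Rightarrow> nat \<Rightarrow> nat \<Rightarrow> nat" where
  "cyc k d x = (if k \<le> x \<and> x < k + d then x + 1 else if x = k + d then k else x)"

definition is_shift :: "nat \<Rightarrow> (nat \<Rightarrow> nat) \<Rightarrow> (nat \<Rightarrow> nat) \<Rightarrow> nat \<Rightarrow> nat \<Rightarrow> bool" where
  "is_shift N \<sigma> \<tau> k d \<longleftrightarrow> k \<le> N - 2 \<and> 1 \<le> d \<and> d \<le> N - 1 - k \<and> \<tau> = cyc k d \<circ> \<sigma>"

definition omega :: "nat \<Rightarrow> (nat \<Rightarrow> nat) \<Rightarrow> (nat \<Rightarrow> nat) \<Rightarrow> real" where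
  "omega N \<sigma> \<tau> =
     (if \<exists>k d. is_shift N \<sigma> \<tau> k d
      then 1 / real (THE d. \<exists>k. is_shift N \<sigma> \<tau> k d) else 0)"

definition perms :: "nat \<Rightarrow> (nat \<Rightarrow> nat) set" where
  "perms N = {\<sigma>. \<sigma> permutes {..<N}}"

definition Wsum :: "nat \<Rightarrow> (qstate \<Rightarrow> qstate) \<Rightarrow> nat \<Rightarrow> complex" where
  "Wsum N U j = (\<Sum>\<sigma>\<in>perms N. \<Sum>\<tau>\<in>perms N.
      complex_of_real (omega N \<sigma> \<tau>) * ipl2 (psi N U \<sigma> j) (psi N U \<tau> j))"

end

theory Submission
  imports Defs
begin

lemma recip_sum_ge:
  fixes p q :: real assumes "p > 0" "q > 0"
  shows "1/p + 1/q \<ge> 4/(p+q)"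
proof -
  have "(p+q)^2 - 4*(p*q) = (p-q)^2" by algebra
  then have "4*(p*q) \<le> (p+q)*(p+q)" by (simp add: power2_eq_square) (metis diff_ge_0_iff_ge zero_le_square power2_eq_square)
  then show ?thesis using assms by (simp add: field_simps)
qed

lemma mid_convex:
  fixes c x y :: real
  assumes c: "c > 0" and x: "x > 0" and y: "y > 0"
  shows "2 * (sqrt c / (((x+y)/2 + c) * sqrt ((x+y)/2))) \<le>
         sqrt c / ((x + c) * sqrt x) + sqrt c / ((y + c) * sqrt y)"
proof -
  define a where "a = sqrt x"
  define b where "b = sqrt y"
  have a: "a > 0" "a^2 = x" using x by (auto simp: a_def)
  have b: "b > 0" "b^2 = y" using y by (auto simp: b_def)
  define t where "t = (x+y)/2"
  have t: "t > 0" using x y by (simp add: t_def)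
  have st: "(a + b)/2 \<le> sqrt t"
  proof (rule real_le_rsqrt)
    have "((a+b)/2)^2 \<le> (a^2+b^2)/2" proof -
      have "(a+b)^2 + (a-b)^2 = 2*(a^2+b^2)" by algebra
      moreover have "0 \<le> (a-b)^2" by simp
      moreover have "((a+b)/2)^2 = (a+b)^2/4" by (simp add: power_divide)
      ultimately show ?thesis by linarith
    qed
    then show "((a+b)/2)^2 \<le> t" using a b by (simp add: t_def)
  qed
  have u: "1/a + 1/b \<ge> 2 / sqrt t"
  proof -
    have "1/a + 1/b \<ge> 4/(a+b)" using recip_sum_ge a b by simp
    moreover have "4/(a+b) \<ge> 2 / sqrt t" using st a b t
      by (simp add: field_simps)
    ultimately show ?thesis by linarith
  qed
  have v: "1/(x+c) + 1/(y+c) \<ge> 2/(t+c)"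
  proof -
    have "(x+c) + (y+c) = 2*(t+c)" by (simp add: t_def)
    moreover have "4/(2*(t+c)) = 2/(t+c)" using t c by (simp add: field_simps)
    ultimately show ?thesis using recip_sum_ge[of "x+c" "y+c"] x y c t by (simp add: add.commute)
  qed
  have cheb: "(1/a)*(1/(x+c)) + (1/b)*(1/(y+c)) \<ge> (1/a + 1/b)*(1/(x+c) + 1/(y+c))/2"
  proof -
    have "(1/a - 1/b)*(1/(x+c) - 1/(y+c)) \<ge> 0"
    proof (cases "a \<le> b")
      case True
      then have "x \<le> y" using a b by (metis power_mono less_imp_le)
      then show ?thesis using True a b c x y
        by (intro mult_nonneg_nonneg) (auto simp: frac_le)
    next
      case False
      then have "y \<le> x" using a b by (metis power_mono less_imp_le not_le)
      then show ?thesis using False a b c x y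
        by (intro mult_nonpos_nonpos) (auto simp: frac_le)
    qed
    then show ?thesis by (simp add: algebra_simps)
  qed
  have "(1/a + 1/b)*(1/(x+c) + 1/(y+c)) \<ge> (2/sqrt t) * (2/(t+c))"
    using u v t c a b by (intro mult_mono) auto
  with cheb have main: "(1/a)*(1/(x+c)) + (1/b)*(1/(y+c)) \<ge> 2 * (1/(sqrt t * (t+c)))"
    by simp
  have "sqrt c * (2 * (1/(sqrt t * (t+c)))) \<le> sqrt c * ((1/a)*(1/(x+c)) + (1/b)*(1/(y+c)))"
    using main c by (intro mult_left_mono) auto
  then show ?thesis by (simp add: a_def b_def t_def field_simps)
qed

definition gg :: "real \<Rightarrow> real \<Rightarrow> real" where
  "gg c t = sqrt c / ((t + c) * sqrt t)"
definition FF :: "real \<Rightarrow> real \<Rightarrow> real" where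
  "FF c t = 2 * arctan (sqrt t / sqrt c)"

lemma FF_deriv:
  assumes c: "c > 0" and t: "t > 0"
  shows "(FF c has_real_derivative gg c t) (at t)"
proof -
  have d1: "((\<lambda>t. sqrt t / sqrt c) has_real_derivative (inverse (sqrt t) / 2) / sqrt c) (at t)"
    using DERIV_real_sqrt[OF t] by (intro DERIV_cdivide)
  have d2: "((\<lambda>t. 2 * arctan (sqrt t / sqrt c)) has_real_derivative
     2 * (inverse (1 + (sqrt t / sqrt c)\<^sup>2) * ((inverse (sqrt t) / 2) / sqrt c))) (at t)"
    by (intro DERIV_cmult DERIV_chain2[OF DERIV_arctan d1])
  have alg: "2 * (inverse (1 + (u / s)\<^sup>2) * ((inverse u / 2) / s)) = s / ((u^2 + s^2) * u)"
    if "s > 0" "u > 0" for s u :: real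
  proof -
    have p: "s*(s*u)+u*(u*u) > 0" using that by (simp add: add_pos_pos)
    have "s*(s*(u*2)) + u*(u*(u*2)) = 2*(s*(s*u)+u*(u*u))" by algebra
    with p that show ?thesis by (simp add: field_simps power2_eq_square)
  qed
  have eq: "2 * (inverse (1 + (sqrt t / sqrt c)\<^sup>2) * ((inverse (sqrt t) / 2) / sqrt c)) = gg c t"
    using alg[of "sqrt c" "sqrt t"] c t unfolding gg_def by simp
  show ?thesis using d2 eq unfolding FF_def by simp
qed

lemma FF_cont: "c > 0 \<Longrightarrow> continuous_on S (FF c)"
  unfolding FF_def by (intro continuous_intros) auto

lemma FF_step:
  assumes c: "c > 0" and t0: "t0 \<ge> 1/2"
  shows "gg c t0 \<le> FF c (t0 + 1/2) - FF c (t0 - 1/2)"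
proof -
  define h where "h s = FF c (t0 + s) - FF c (t0 - s) - 2 * s * (gg c t0)" for s
  have der: "\<exists>y. DERIV h s :> y \<and> y \<ge> 0" if s: "0 < s" "s < 1/2" for s
  proof -
    have d1: "DERIV (\<lambda>s. FF c (t0 + s)) s :> gg c (t0 + s) * 1"
      using c s t0 by (intro DERIV_chain2[OF FF_deriv]) (auto intro!: derivative_eq_intros)
    have d2: "DERIV (\<lambda>s. FF c (t0 - s)) s :> gg c (t0 - s) * (-1)"
      using c s t0 by (intro DERIV_chain2[OF FF_deriv]) (auto intro!: derivative_eq_intros)
    have d3: "DERIV h s :> gg c (t0 + s) * 1 - gg c (t0 - s) * (-1) - 2 * gg c t0"
      unfolding h_def using d1 d2 by (auto intro!: derivative_eq_intros)
    have "2 * gg c t0 \<le> gg c (t0 - s) + gg c (t0 + s)"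
      using mid_convex[of c "t0 - s" "t0 + s"] c s t0 unfolding gg_def by simp
    then show ?thesis using d3 by (intro exI[of _ "gg c (t0 + s) * 1 - gg c (t0 - s) * (-1) - 2 * gg c t0"]) auto
  qed
  have cont: "continuous_on {0..1/2} h" unfolding h_def
    using c by (intro continuous_intros continuous_on_compose2[OF FF_cont[OF c]]) auto
  have "h 0 \<le> h (1/2)"
    by (rule DERIV_nonneg_imp_increasing_open[of 0 "1/2" h, OF _ der cont]) auto
  then show ?thesis unfolding h_def by simp
qed

lemma FF_zero: "FF c 0 = 0" unfolding FF_def by simp

lemma hil_tele:
  assumes c: "c > 0"
  shows "(\<Sum>n\<le>M. gg c (real n + 1/2)) \<le> FF c (real M + 1)"
proof (induction M)
  case 0
  then show ?case using FF_step[OF c, of "1/2"] by (simp add: FF_zero)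
next
  case (Suc M)
  have "gg c (real (Suc M) + 1/2) \<le> FF c (real (Suc M) + 1) - FF c (real M + 1)"
    using FF_step[OF c, of "real (Suc M) + 1/2"] by (simp add: algebra_simps)
  with Suc show ?case by simp
qed

lemma hilbert_row:
  "(\<Sum>n\<le>M. 1/(real m + real n + 1) * (sqrt (real m + 1/2) / sqrt (real n + 1/2))) \<le> pi"
proof -
  define c where "c = real m + 1/2"
  have c: "c > 0" by (simp add: c_def)
  have "(\<Sum>n\<le>M. 1/(real m + real n + 1) * (sqrt (real m + 1/2) / sqrt (real n + 1/2)))
      = (\<Sum>n\<le>M. gg c (real n + 1/2))"
  proof (rule sum.cong)
    fix n assume "n \<in> {..M}"
    have "real n + 1/2 + c = real m + real n + 1" by (simp add: c_def)
    then show "1/(real m + real n + 1) * (sqrt (real m + 1/2) / sqrt (real n + 1/2)) = gg c (real n + 1/2)"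
      unfolding gg_def c_def by simp
  qed simp
  also have "\<dots> \<le> FF c (real M + 1)" by (rule hil_tele[OF c])
  also have "\<dots> \<le> pi" unfolding FF_def using arctan_ubound[of "sqrt (real M + 1) / sqrt c"] by simp
  finally show ?thesis .
qed

definition KD :: "nat \<Rightarrow> (nat \<times> nat) set" where
  "KD N = {(k,d). k \<le> N - 2 \<and> 1 \<le> d \<and> d \<le> N - 1 - k}"

lemma KD_iff: "(k,d) \<in> KD N \<longleftrightarrow> k \<le> N - 2 \<and> 1 \<le> d \<and> d \<le> N - 1 - k"
  by (simp add: KD_def)

lemma KD_bound: "(k,d) \<in> KD N \<Longrightarrow> 1 \<le> d \<and> k + d < N"
  by (auto simp: KD_def)

lemma finite_KD: "finite (KD N)"
proof -
  have "KD N \<subseteq> {..<N} \<times> {..<N}" by (auto simp: KD_def)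
  then show ?thesis by (rule finite_subset) auto
qed

lemma is_shift_KD: "is_shift N \<sigma> \<tau> k d \<longleftrightarrow> (k,d) \<in> KD N \<and> \<tau> = cyc k d \<circ> \<sigma>"
  by (auto simp: is_shift_def KD_def)

lemma cyc_inj_params:
  assumes "1 \<le> d" "1 \<le> d'" "cyc k d = cyc k' d'"
  shows "k = k' \<and> d = d'"
proof -
  have e: "\<And>x. cyc k d x = cyc k' d' x" using assms(3) by simp
  have "k = k'"
  proof (rule ccontr)
    assume "k \<noteq> k'"
    then have "k < k' \<or> k' < k" by arith
    then show False
    proof
      assume "k < k'" then show False using e[of k] assms(1,2) by (auto simp: cyc_def split: if_splits)
    next
      assume "k' < k" then show False using e[of k'] assms(1,2) by (auto simp: cyc_def split: if_splits)
    qed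
  qed
  moreover have "d = d'"
  proof (rule ccontr)
    assume "d \<noteq> d'"
    then have "d < d' \<or> d' < d" by arith
    then show False
    proof
      assume "d < d'" then show False using e[of "k+d"] \<open>k = k'\<close> assms(1,2) by (auto simp: cyc_def split: if_splits)
    next
      assume "d' < d" then show False using e[of "k+d'"] \<open>k = k'\<close> assms(1,2) by (auto simp: cyc_def split: if_splits)
    qed
  qed
  ultimately show ?thesis by simp
qed

lemma cyc_inj: "inj (cyc k d)"
  unfolding inj_def cyc_def by auto

lemma cyc_permutes:
  assumes "k + d < N"
  shows "cyc k d permutes {..<N}"
proof (rule bij_imp_permutes)
  have sub: "cyc k d ` {..<N} \<subseteq> {..<N}" using assms by (auto simp: cyc_def)
  have "cyc k d ` {..<N} = {..<N}"
    by (rule endo_inj_surj) (use sub cyc_inj[of k d] in \<open>auto intro: inj_on_subset\<close>)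
  then show "bij_betw (cyc k d) {..<N} {..<N}"
    using cyc_inj[of k d] by (simp add: bij_betw_def inj_on_subset[of _ UNIV])
  show "\<And>x. x \<notin> {..<N} \<Longrightarrow> cyc k d x = x" using assms by (auto simp: cyc_def)
qed

lemma shift_unique:
  assumes "\<sigma> permutes {..<N}" "is_shift N \<sigma> \<tau> k d" "is_shift N \<sigma> \<tau> k' d'"
  shows "k = k' \<and> d = d'"
proof -
  have "cyc k d \<circ> \<sigma> = cyc k' d' \<circ> \<sigma>" using assms(2,3) by (simp add: is_shift_def)
  moreover have "surj \<sigma>" using assms(1) by (rule permutes_surj)
  ultimately have "cyc k d = cyc k' d'"
    by (metis fun.map_comp permutes_inv_o(1)[OF assms(1)] comp_id)
  then show ?thesis using cyc_inj_params assms(2,3) by (auto simp: is_shift_def)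
qed

lemma omega_val:
  assumes "\<sigma> permutes {..<N}" "(k,d) \<in> KD N"
  shows "omega N \<sigma> (cyc k d \<circ> \<sigma>) = 1 / real d"
proof -
  have sh: "is_shift N \<sigma> (cyc k d \<circ> \<sigma>) k d" using assms(2) by (simp add: is_shift_KD)
  have "(THE d'. \<exists>k'. is_shift N \<sigma> (cyc k d \<circ> \<sigma>) k' d') = d"
    using sh shift_unique[OF assms(1) sh] by (intro the_equality) auto
  then show ?thesis using sh unfolding omega_def by auto
qed

lemma omega_zero:
  assumes "\<tau> \<notin> (\<lambda>(k,d). cyc k d \<circ> \<sigma>) ` KD N"
  shows "omega N \<sigma> \<tau> = 0"
  using assms unfolding omega_def by (auto simp: is_shift_KD)

lemma perms_cyc: "\<sigma> \<in> perms N \<Longrightarrow> (k,d) \<in> KD N \<Longrightarrow> cyc k d \<circ> \<sigma> \<in> perms N"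
  unfolding perms_def using KD_bound by (auto intro!: permutes_compose cyc_permutes)

lemma omega_sum:
  fixes F :: "(nat \<Rightarrow> nat) \<Rightarrow> 'a::real_algebra_1"
  assumes "\<sigma> \<in> perms N"
  shows "(\<Sum>\<tau>\<in>perms N. of_real (omega N \<sigma> \<tau>) * F \<tau>)
       = (\<Sum>(k,d)\<in>KD N. of_real (1 / real d) * F (cyc k d \<circ> \<sigma>))"
proof -
  have sp: "\<sigma> permutes {..<N}" using assms by (simp add: perms_def)
  define im where "im = (\<lambda>(k,d). cyc k d \<circ> \<sigma>) ` KD N"
  have imsub: "im \<subseteq> perms N" unfolding im_def using perms_cyc[OF assms] by auto
  have fin: "finite (perms N)" unfolding perms_def by (rule finite_permutations) simp
  have inj: "inj_on (\<lambda>(k,d). cyc k d \<circ> \<sigma>) (KD N)"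
  proof (rule inj_onI, clarify)
    fix k d k' d' assume a: "(k,d) \<in> KD N" "(k',d') \<in> KD N" "cyc k d \<circ> \<sigma> = cyc k' d' \<circ> \<sigma>"
    then have "is_shift N \<sigma> (cyc k d \<circ> \<sigma>) k d" "is_shift N \<sigma> (cyc k d \<circ> \<sigma>) k' d'"
      by (auto simp: is_shift_KD)
    then show "k = k' \<and> d = d'" using shift_unique[OF sp] by blast
  qed
  have "(\<Sum>\<tau>\<in>perms N. of_real (omega N \<sigma> \<tau>) * F \<tau>) = (\<Sum>\<tau>\<in>im. of_real (omega N \<sigma> \<tau>) * F \<tau>)"
    by (rule sum.mono_neutral_right[OF fin imsub]) (auto simp: im_def omega_zero)
  also have "\<dots> = (\<Sum>(k,d)\<in>KD N. of_real (omega N \<sigma> (cyc k d \<circ> \<sigma>)) * F (cyc k d \<circ> \<sigma>))"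
    unfolding im_def by (subst sum.reindex[OF inj]) (simp add: case_prod_unfold)
  also have "\<dots> = (\<Sum>(k,d)\<in>KD N. of_real (1 / real d) * F (cyc k d \<circ> \<sigma>))"
    by (rule sum.cong) (auto simp: omega_val[OF sp])
  finally show ?thesis .
qed

definition FL :: "nat \<Rightarrow> nat \<Rightarrow> nat \<Rightarrow> nat \<Rightarrow> bool" where
  "FL k d a b \<longleftrightarrow> (b = k + d \<and> k \<le> a \<and> a < b) \<or> (a = k + d \<and> k \<le> b \<and> b < a)"

definition RR :: "nat \<Rightarrow> nat \<Rightarrow> nat \<Rightarrow> nat \<Rightarrow> real" where
  "RR k d a b = sqrt (real (k+d) - real (min a b) - 1/2) / sqrt (real (min a b) - real k + 1/2)"

definition BB :: "nat \<Rightarrow> nat \<Rightarrow> nat \<Rightarrow> nat \<Rightarrow> real" where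
  "BB k d a b = (if a \<noteq> b \<and> min a b = k \<and> k < max a b \<and> max a b \<le> k + d
     then sqrt (real (max a b) - real k - 1/2) / sqrt (real (k+d) - real (max a b) + 1/2) else 0)"

lemma cyc_lt: "x < k \<Longrightarrow> cyc k d x = x" by (simp add: cyc_def)
lemma cyc_mid: "k \<le> x \<Longrightarrow> x < k + d \<Longrightarrow> cyc k d x = x + 1" by (simp add: cyc_def)
lemma cyc_top: "1 \<le> d \<Longrightarrow> cyc k d (k + d) = k" by (simp add: cyc_def)
lemma cyc_gt: "k + d < x \<Longrightarrow> cyc k d x = x" by (simp add: cyc_def)

lemma cyc_order:
  assumes "1 \<le> d" "(a < b) \<noteq> (cyc k d a < cyc k d b)"
  shows "FL k d a b"
proof -
  have ca: "a < k \<or> (k \<le> a \<and> a < k+d) \<or> a = k+d \<or> k+d < a" by arith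
  have cb: "b < k \<or> (k \<le> b \<and> b < k+d) \<or> b = k+d \<or> k+d < b" by arith
  from ca cb assms show ?thesis
    by (elim disjE conjE) (simp_all add: cyc_lt cyc_mid cyc_top cyc_gt FL_def)
qed

lemma RR_pos: assumes "FL k d a b" shows "RR k d a b > 0"
proof -
  have "min a b < k + d" "k \<le> min a b" using assms unfolding FL_def by (auto simp: min_def)
  then have "real (k+d) - real (min a b) - 1/2 > 0" "real (min a b) - real k + 1/2 > 0" by linarith+
  then show ?thesis unfolding RR_def by simp
qed

lemma BB_nonneg: "BB k d a b \<ge> 0"
  unfolding BB_def by auto

lemma cyc_BB:
  assumes "1 \<le> d" "FL k d a b"
  shows "BB k d (cyc k d a) (cyc k d b) = 1 / RR k d a b"
proof -
  have gen: "BB k d (cyc k d lo) (cyc k d hi) = 1 / RR k d lo hi"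
    if "lo < hi" "hi = k + d" "k \<le> lo" for lo hi
  proof -
    have c1: "cyc k d lo = lo + 1" "cyc k d hi = k" using that assms(1) by (auto simp: cyc_def)
    have mm: "min (lo+1) k = k" "max (lo+1) k = lo + 1" "lo + 1 \<noteq> k" "k < lo + 1" "lo + 1 \<le> k + d"
      using that by auto
    have e1: "real (lo+1) - real k - 1/2 = real lo - real k + 1/2" by simp
    have e2: "real (k+d) - real (lo+1) + 1/2 = real (k+d) - real lo - 1/2" by simp
    have "BB k d (lo+1) k = sqrt (real (lo+1) - real k - 1/2) / sqrt (real (k+d) - real (lo+1) + 1/2)"
      unfolding BB_def using mm by (simp only: if_True simp_thms)
    then have X: "BB k d (lo+1) k = sqrt (real lo - real k + 1/2) / sqrt (real (k+d) - real lo - 1/2)"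
      by (simp only: e1 e2)
    have Y: "RR k d lo hi = sqrt (real (k+d) - real lo - 1/2) / sqrt (real lo - real k + 1/2)"
      unfolding RR_def using that by simp
    show ?thesis unfolding c1 X Y by (simp only: divide_divide_eq_right mult_1_left)
  qed
  have sym1: "BB k d x y = BB k d y x" for x y
  proof -
    have "min x y = min y x" "max x y = max y x" "(x \<noteq> y) = (y \<noteq> x)" by auto
    then show ?thesis unfolding BB_def by (simp only:)
  qed
  have sym2: "RR k d x y = RR k d y x" for x y
  proof -
    have "min x y = min y x" by auto
    then show ?thesis unfolding RR_def by (simp only:)
  qed
  show ?thesis
  proof (cases "a < b")
    case True
    then have "b = k + d" "k \<le> a" using assms(2) unfolding FL_def by auto
    then show ?thesis using gen[of a b] True by blast
  next
    case False
    then have "b < a" "a = k + d" "k \<le> b" using assms(2) unfolding FL_def by auto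
    then have "BB k d (cyc k d b) (cyc k d a) = 1 / RR k d b a"
      using gen[of b a] by blast
    then show ?thesis using sym1[of "cyc k d a" "cyc k d b"] sym2[of a b] by metis
  qed
qed

lemma HA:
  assumes "a < N" "b < N"
  shows "(\<Sum>(k,d)\<in>KD N. 1 / real d * (if FL k d a b then RR k d a b else 0)) \<le> pi"
proof (cases "a = b")
  case True
  then have "\<And>k d. \<not> FL k d a b" by (auto simp: FL_def)
  then show ?thesis by (simp add: pi_ge_zero)
next
  case False
  define lo where "lo = min a b"
  define hi where "hi = max a b"
  have lohi: "lo < hi" "hi < N" using False assms by (auto simp: lo_def hi_def)
  have FLiff: "FL k d a b \<longleftrightarrow> k + d = hi \<and> k \<le> lo" for k d
    using False unfolding FL_def lo_def hi_def by (auto simp: min_def max_def)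
  define S where "S = (\<lambda>j. (lo - j, hi - lo + j)) ` {..lo}"
  have SK: "S \<subseteq> KD N" using lohi unfolding S_def KD_def by auto
  have inj: "inj_on (\<lambda>j. (lo - j, hi - lo + j)) {..lo}" by (auto simp: inj_on_def)
  define f where "f = (\<lambda>(k,d). 1 / real d * (if FL k d a b then RR k d a b else 0))"
  have "(\<Sum>(k,d)\<in>KD N. 1 / real d * (if FL k d a b then RR k d a b else 0)) = sum f (KD N)"
    by (simp add: f_def)
  also have "\<dots> = sum f S"
  proof (rule sum.mono_neutral_right[OF finite_KD SK], rule ballI)
    fix kd assume kd: "kd \<in> KD N - S"
    obtain k d where kdp: "kd = (k,d)" by (cases kd)
    have "\<not> FL k d a b"
    proof
      assume "FL k d a b"
      then have "k + d = hi" "k \<le> lo" using FLiff by auto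
      then have h1: "(k,d) = (lo - (lo - k), hi - lo + (lo - k))" and h2: "lo - k \<in> {..lo}" using lohi by auto
      have "(k,d) \<in> S" unfolding S_def by (rule image_eqI[where f="\<lambda>j. (lo - j, hi - lo + j)", OF h1 h2])
      then show False using kd kdp by simp
    qed
    then show "f kd = 0" by (simp add: f_def kdp)
  qed
  also have "\<dots> = (\<Sum>j\<le>lo. f (lo - j, hi - lo + j))"
    unfolding S_def by (subst sum.reindex[OF inj]) (simp add: comp_def)
  also have "\<dots> = (\<Sum>j\<le>lo. 1/(real (hi - lo - 1) + real j + 1) * (sqrt (real (hi - lo - 1) + 1/2) / sqrt (real j + 1/2)))"
  proof (rule sum.cong[OF refl])
    fix j assume j: "j \<in> {..lo}"
    have fl: "FL (lo - j) (hi - lo + j) a b" using FLiff j lohi by auto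
    have m: "min a b = lo" by (simp add: lo_def)
    have r1: "real (hi - lo + j) = real (hi - lo - 1) + real j + 1" using lohi by simp
    have r2: "real (lo - j + (hi - lo + j)) - real lo - 1/2 = real (hi - lo - 1) + 1/2"
      using lohi j by (simp add: of_nat_diff)
    have r3: "real lo - real (lo - j) + 1/2 = real j + 1/2" using j by (simp add: of_nat_diff)
    show "f (lo - j, hi - lo + j) = 1/(real (hi - lo - 1) + real j + 1) * (sqrt (real (hi - lo - 1) + 1/2) / sqrt (real j + 1/2))"
      unfolding f_def using fl by (simp only: prod.case if_True RR_def m r1 r2 r3)
  qed
  also have "\<dots> \<le> pi" by (rule hilbert_row)
  finally show ?thesis .
qed

lemma HB:
  assumes "a < N" "b < N"
  shows "(\<Sum>(k,d)\<in>KD N. 1 / real d * BB k d a b) \<le> pi"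
proof (cases "a = b")
  case True
  then show ?thesis by (simp add: BB_def pi_ge_zero)
next
  case False
  define lo where "lo = min a b"
  define hi where "hi = max a b"
  have lohi: "lo < hi" "hi < N" using False assms by (auto simp: lo_def hi_def)
  have BBz: "BB k d a b = 0" if "\<not> (k = lo \<and> hi \<le> k + d)" for k d
    using that False unfolding BB_def lo_def hi_def by auto
  have BBv: "BB k d a b = sqrt (real hi - real k - 1/2) / sqrt (real (k+d) - real hi + 1/2)"
    if "k = lo" "hi \<le> k + d" for k d
    using that False lohi unfolding BB_def lo_def hi_def by auto
  define S where "S = (\<lambda>n. (lo, hi - lo + n)) ` {..N - 1 - hi}"
  have SK: "S \<subseteq> KD N" using lohi unfolding S_def KD_def by auto
  have inj: "inj_on (\<lambda>n. (lo, hi - lo + n)) {..N - 1 - hi}" by (auto simp: inj_on_def)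
  define f where "f = (\<lambda>(k,d). 1 / real d * BB k d a b)"
  have "(\<Sum>(k,d)\<in>KD N. 1 / real d * BB k d a b) = sum f (KD N)"
    by (simp add: f_def)
  also have "\<dots> = sum f S"
  proof (rule sum.mono_neutral_right[OF finite_KD SK], rule ballI)
    fix kd assume kd: "kd \<in> KD N - S"
    obtain k d where kdp: "kd = (k,d)" by (cases kd)
    have "\<not> (k = lo \<and> hi \<le> k + d)"
    proof
      assume h: "k = lo \<and> hi \<le> k + d"
      have "k + d < N" using kd kdp KD_bound by auto
      then have h1: "(k,d) = (lo, hi - lo + (d - (hi - lo)))" and h2: "d - (hi - lo) \<in> {..N - 1 - hi}" using h lohi by auto
      have "(k,d) \<in> S" unfolding S_def by (rule image_eqI[where f="\<lambda>n. (lo, hi - lo + n)", OF h1 h2])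
      then show False using kd kdp by simp
    qed
    then show "f kd = 0" by (simp add: f_def kdp BBz)
  qed
  also have "\<dots> = (\<Sum>n\<le>N - 1 - hi. f (lo, hi - lo + n))"
    unfolding S_def by (subst sum.reindex[OF inj]) (simp add: comp_def)
  also have "\<dots> = (\<Sum>n\<le>N - 1 - hi. 1/(real (hi - lo - 1) + real n + 1) * (sqrt (real (hi - lo - 1) + 1/2) / sqrt (real n + 1/2)))"
  proof (rule sum.cong[OF refl])
    fix n assume n: "n \<in> {..N - 1 - hi}"
    have v: "BB lo (hi - lo + n) a b = sqrt (real hi - real lo - 1/2) / sqrt (real (lo + (hi - lo + n)) - real hi + 1/2)"
      using BBv[of lo "hi - lo + n"] lohi by auto
    have r1: "real (hi - lo + n) = real (hi - lo - 1) + real n + 1" using lohi by simp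
    have r2: "real hi - real lo - 1/2 = real (hi - lo - 1) + 1/2" using lohi by (simp add: of_nat_diff)
    have r3: "real (lo + (hi - lo + n)) - real hi + 1/2 = real n + 1/2" using lohi by (simp add: of_nat_diff)
    show "f (lo, hi - lo + n) = 1/(real (hi - lo - 1) + real n + 1) * (sqrt (real (hi - lo - 1) + 1/2) / sqrt (real n + 1/2))"
      unfolding f_def by (simp only: prod.case v r1 r2 r3)
  qed
  also have "\<dots> \<le> pi" by (rule hilbert_row)
  finally show ?thesis .
qed

definition sg :: "nat \<Rightarrow> (nat \<Rightarrow> nat) \<Rightarrow> nat \<times> nat \<times> nat \<Rightarrow> complex" where
  "sg N \<sigma> x = (case x of (z, i, i') \<Rightarrow> if i < N \<and> i' < N \<and> \<sigma> i < \<sigma> i' then -1 else 1)"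

definition W1 :: "nat \<Rightarrow> (nat \<Rightarrow> nat) \<Rightarrow> nat \<Rightarrow> nat \<Rightarrow> nat \<times> nat \<times> nat \<Rightarrow> real" where
  "W1 N \<sigma> k d x = (case x of (z, i, i') \<Rightarrow>
     if i < N \<and> i' < N then (if FL k d (\<sigma> i) (\<sigma> i') then RR k d (\<sigma> i) (\<sigma> i') else 0) else 0)"

definition W2 :: "nat \<Rightarrow> (nat \<Rightarrow> nat) \<Rightarrow> nat \<Rightarrow> nat \<Rightarrow> nat \<times> nat \<times> nat \<Rightarrow> real" where
  "W2 N \<tau> k d x = (case x of (z, i, i') \<Rightarrow> if i < N \<and> i' < N then BB k d (\<tau> i) (\<tau> i') else 0)"

lemma phase_sg: "phase_op N \<sigma> f = (\<lambda>x. sg N \<sigma> x * f x)"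
  unfolding phase_op_def sg_def by (auto simp: fun_eq_iff)

lemma cnj_sg: "cnj (sg N \<sigma> x) = sg N \<sigma> x"
  unfolding sg_def by (auto split: prod.splits)

lemma cmod_sg: "cmod (sg N \<sigma> x) = 1"
  unfolding sg_def by (auto split: prod.splits)

lemma W1_nonneg: "W1 N \<sigma> k d x \<ge> 0"
  unfolding W1_def using RR_pos by (auto split: prod.splits intro: less_imp_le)

lemma W2_nonneg: "W2 N \<sigma> k d x \<ge> 0"
  unfolding W2_def by (auto split: prod.splits simp: BB_nonneg)

lemma amgm:
  fixes R u v :: real
  assumes "R > 0"
  shows "2 * u * v \<le> R * u\<^sup>2 + (1 / R) * v\<^sup>2"
proof -
  have "0 \<le> (R * u - v)\<^sup>2" by simp
  then have "2 * u * v * R \<le> (R * u)\<^sup>2 + v\<^sup>2" by (simp add: power2_diff algebra_simps)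
  then have "(2 * u * v * R) / R \<le> ((R * u)\<^sup>2 + v\<^sup>2) / R" using assms by (intro divide_right_mono) auto
  moreover have "(2 * u * v * R) / R = 2 * u * v" using assms by simp
  moreover have "((R * u)\<^sup>2 + v\<^sup>2) / R = R * u\<^sup>2 + (1 / R) * v\<^sup>2" using assms
    by (simp add: power2_eq_square field_simps)
  ultimately show ?thesis by simp
qed

lemma term_bound:
  assumes kd: "(k,d) \<in> KD N"
  shows "cmod (cnj p * q * (1 - sg N \<sigma> x * sg N (cyc k d \<circ> \<sigma>) x))
     \<le> W1 N \<sigma> k d x * (cmod p)\<^sup>2 + W2 N (cyc k d \<circ> \<sigma>) k d x * (cmod q)\<^sup>2"
proof -
  obtain z i i' where x: "x = (z, i, i')" by (cases x) auto
  have d1: "1 \<le> d" using KD_bound[OF kd] by simp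
  have rhs0: "0 \<le> W1 N \<sigma> k d x * (cmod p)\<^sup>2 + W2 N (cyc k d \<circ> \<sigma>) k d x * (cmod q)\<^sup>2"
    using W1_nonneg W2_nonneg by (intro add_nonneg_nonneg mult_nonneg_nonneg) auto
  show ?thesis
  proof (cases "i < N \<and> i' < N")
    case False
    then have "sg N \<sigma> x = 1" "sg N (cyc k d \<circ> \<sigma>) x = 1" by (auto simp: sg_def x)
    then show ?thesis using rhs0 by simp
  next
    case True
    note iN = True
    show ?thesis
    proof (cases "FL k d (\<sigma> i) (\<sigma> i')")
      case False
      then have "(\<sigma> i < \<sigma> i') = (cyc k d (\<sigma> i) < cyc k d (\<sigma> i'))" using cyc_order[OF d1] by blast
      then have "sg N \<sigma> x = sg N (cyc k d \<circ> \<sigma>) x" by (simp add: sg_def x)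
      moreover have "sg N \<sigma> x * sg N \<sigma> x = 1" by (simp add: sg_def x)
      ultimately show ?thesis using rhs0 by simp
    next
      case True
      define R where "R = RR k d (\<sigma> i) (\<sigma> i')"
      have R: "R > 0" using RR_pos[OF True] by (simp add: R_def)
      have w1: "W1 N \<sigma> k d x = R" using iN True by (simp add: W1_def x R_def)
      have w2: "W2 N (cyc k d \<circ> \<sigma>) k d x = 1 / R" using iN cyc_BB[OF d1 True] by (simp add: W2_def x R_def)
      have "cmod (1 - sg N \<sigma> x * sg N (cyc k d \<circ> \<sigma>) x) \<le> cmod 1 + cmod (sg N \<sigma> x * sg N (cyc k d \<circ> \<sigma>) x)"
        by (rule norm_triangle_ineq4)
      also have "\<dots> = 2" by (simp add: norm_mult cmod_sg)
      finally have s2: "cmod (1 - sg N \<sigma> x * sg N (cyc k d \<circ> \<sigma>) x) \<le> 2" .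
      have "cmod (cnj p * q * (1 - sg N \<sigma> x * sg N (cyc k d \<circ> \<sigma>) x))
          = cmod p * cmod q * cmod (1 - sg N \<sigma> x * sg N (cyc k d \<circ> \<sigma>) x)" by (simp add: norm_mult)
      also have "\<dots> \<le> cmod p * cmod q * 2" using s2 by (intro mult_left_mono) auto
      also have "\<dots> = 2 * cmod p * cmod q" by simp
      also have "\<dots> \<le> R * (cmod p)\<^sup>2 + (1 / R) * (cmod q)\<^sup>2" by (rule amgm[OF R])
      finally show ?thesis using w1 w2 by simp
    qed
  qed
qed

lemma perms_finite: "finite (perms N)"
  unfolding perms_def by (rule finite_permutations) simp

lemma perms_range: "\<sigma> \<in> perms N \<Longrightarrow> i < N \<Longrightarrow> \<sigma> i < N"
  unfolding perms_def using permutes_in_image[of \<sigma> "{..<N}" i] by auto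

lemma W1_sum:
  assumes "\<sigma> \<in> perms N"
  shows "(\<Sum>(k,d)\<in>KD N. 1 / real d * W1 N \<sigma> k d x) \<le> pi"
proof -
  obtain z i i' where x: "x = (z, i, i')" by (cases x) auto
  show ?thesis
  proof (cases "i < N \<and> i' < N")
    case True
    then have "(\<Sum>(k,d)\<in>KD N. 1 / real d * W1 N \<sigma> k d x)
        = (\<Sum>(k,d)\<in>KD N. 1 / real d * (if FL k d (\<sigma> i) (\<sigma> i') then RR k d (\<sigma> i) (\<sigma> i') else 0))"
      by (simp add: W1_def x)
    also have "\<dots> \<le> pi" using True perms_range[OF assms] by (intro HA) auto
    finally show ?thesis .
  next
    case False
    then have z: "W1 N \<sigma> k d x = 0" for k d unfolding W1_def x by auto
    show ?thesis by (simp add: z)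
  qed
qed

lemma W2_sum:
  assumes "\<tau> \<in> perms N"
  shows "(\<Sum>(k,d)\<in>KD N. 1 / real d * W2 N \<tau> k d x) \<le> pi"
proof -
  obtain z i i' where x: "x = (z, i, i')" by (cases x) auto
  show ?thesis
  proof (cases "i < N \<and> i' < N")
    case True
    then have "(\<Sum>(k,d)\<in>KD N. 1 / real d * W2 N \<tau> k d x)
        = (\<Sum>(k,d)\<in>KD N. 1 / real d * BB k d (\<tau> i) (\<tau> i'))"
      by (simp add: W2_def x)
    also have "\<dots> \<le> pi" using True perms_range[OF assms] by (intro HB) auto
    finally show ?thesis .
  next
    case False
    then have z: "W2 N \<tau> k d x = 0" for k d unfolding W2_def x by auto
    show ?thesis by (simp add: z)
  qed
qed

lemma reindex_cyc:
  assumes "(k,d) \<in> KD N"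
  shows "(\<Sum>\<sigma>\<in>perms N. G (cyc k d \<circ> \<sigma>)) = (\<Sum>\<tau>\<in>perms N. G \<tau>)"
proof -
  have cp: "cyc k d permutes {..<N}" using KD_bound[OF assms] by (intro cyc_permutes) auto
  show ?thesis
  proof (rule sum.reindex_bij_witness[where i="\<lambda>\<tau>. inv (cyc k d) \<circ> \<tau>" and j="\<lambda>\<sigma>. cyc k d \<circ> \<sigma>"])
    fix \<sigma> assume "\<sigma> \<in> perms N"
    show "inv (cyc k d) \<circ> (cyc k d \<circ> \<sigma>) = \<sigma>"
      by (simp only: comp_assoc[symmetric] permutes_inv_o(2)[OF cp] id_comp)
    show "cyc k d \<circ> \<sigma> \<in> perms N" using perms_cyc[OF \<open>\<sigma> \<in> perms N\<close> assms] .
  next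
    fix \<tau> assume t: "\<tau> \<in> perms N"
    show "cyc k d \<circ> (inv (cyc k d) \<circ> \<tau>) = \<tau>"
      by (simp only: comp_assoc[symmetric] permutes_inv_o(1)[OF cp] id_comp)
    show "inv (cyc k d) \<circ> \<tau> \<in> perms N"
      using t permutes_inv[OF cp] unfolding perms_def by (auto intro: permutes_compose)
  qed simp
qed

lemma hcm: "cmod (complex_of_real (1 / real d) * z) = 1 / real d * cmod z"
  unfolding norm_mult norm_of_real by simp

lemma pointwise:
  fixes p :: "(nat \<Rightarrow> nat) \<Rightarrow> complex"
  shows "cmod (\<Sum>\<sigma>\<in>perms N. \<Sum>\<tau>\<in>perms N. complex_of_real (omega N \<sigma> \<tau>) *
            (cnj (p \<sigma>) * p \<tau> - cnj (sg N \<sigma> x * p \<sigma>) * (sg N \<tau> x * p \<tau>)))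
         \<le> 2 * pi * (\<Sum>\<sigma>\<in>perms N. (cmod (p \<sigma>))\<^sup>2)"
proof -
  define P where "P = perms N"
  define T where "T \<sigma> \<tau> = cnj (p \<sigma>) * p \<tau> * (1 - sg N \<sigma> x * sg N \<tau> x)" for \<sigma> \<tau>
  have T_eq: "cnj (p \<sigma>) * p \<tau> - cnj (sg N \<sigma> x * p \<sigma>) * (sg N \<tau> x * p \<tau>) = T \<sigma> \<tau>" for \<sigma> \<tau>
    unfolding T_def by (simp add: cnj_sg algebra_simps)
  have "(\<Sum>\<sigma>\<in>P. \<Sum>\<tau>\<in>P. complex_of_real (omega N \<sigma> \<tau>) *
            (cnj (p \<sigma>) * p \<tau> - cnj (sg N \<sigma> x * p \<sigma>) * (sg N \<tau> x * p \<tau>)))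
      = (\<Sum>\<sigma>\<in>P. \<Sum>(k,d)\<in>KD N. complex_of_real (1 / real d) * T \<sigma> (cyc k d \<circ> \<sigma>))"
    unfolding T_eq P_def by (rule sum.cong[OF refl], rule omega_sum)
  also have "cmod \<dots> \<le> (\<Sum>\<sigma>\<in>P. \<Sum>(k,d)\<in>KD N. 1 / real d * cmod (T \<sigma> (cyc k d \<circ> \<sigma>)))"
  proof -
    have "cmod (\<Sum>\<sigma>\<in>P. \<Sum>(k,d)\<in>KD N. complex_of_real (1 / real d) * T \<sigma> (cyc k d \<circ> \<sigma>))
        \<le> (\<Sum>\<sigma>\<in>P. cmod (\<Sum>(k,d)\<in>KD N. complex_of_real (1 / real d) * T \<sigma> (cyc k d \<circ> \<sigma>)))"
      by (rule norm_sum)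
    also have "\<dots> \<le> (\<Sum>\<sigma>\<in>P. \<Sum>(k,d)\<in>KD N. cmod (complex_of_real (1 / real d) * T \<sigma> (cyc k d \<circ> \<sigma>)))"
      by (rule sum_mono) (simp add: case_prod_unfold norm_sum)
    also have "\<dots> = (\<Sum>\<sigma>\<in>P. \<Sum>(k,d)\<in>KD N. 1 / real d * cmod (T \<sigma> (cyc k d \<circ> \<sigma>)))"
      by (simp only: hcm)
    finally show ?thesis .
  qed
  also have "\<dots> \<le> (\<Sum>\<sigma>\<in>P. \<Sum>(k,d)\<in>KD N. 1 / real d *
        (W1 N \<sigma> k d x * (cmod (p \<sigma>))\<^sup>2 + W2 N (cyc k d \<circ> \<sigma>) k d x * (cmod (p (cyc k d \<circ> \<sigma>)))\<^sup>2))"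
  proof (rule sum_mono, rule sum_mono, clarify)
    fix \<sigma> k d assume kd: "(k,d) \<in> KD N"
    show "1 / real d * cmod (T \<sigma> (cyc k d \<circ> \<sigma>)) \<le> 1 / real d *
        (W1 N \<sigma> k d x * (cmod (p \<sigma>))\<^sup>2 + W2 N (cyc k d \<circ> \<sigma>) k d x * (cmod (p (cyc k d \<circ> \<sigma>)))\<^sup>2)"
      unfolding T_def by (intro mult_left_mono term_bound[OF kd]) auto
  qed
  also have "\<dots> = (\<Sum>\<sigma>\<in>P. \<Sum>(k,d)\<in>KD N. 1 / real d * W1 N \<sigma> k d x * (cmod (p \<sigma>))\<^sup>2)
      + (\<Sum>\<sigma>\<in>P. \<Sum>(k,d)\<in>KD N. 1 / real d * W2 N (cyc k d \<circ> \<sigma>) k d x * (cmod (p (cyc k d \<circ> \<sigma>)))\<^sup>2)"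
    by (simp add: sum.distrib[symmetric] case_prod_unfold algebra_simps)
  also have "(\<Sum>\<sigma>\<in>P. \<Sum>(k,d)\<in>KD N. 1 / real d * W1 N \<sigma> k d x * (cmod (p \<sigma>))\<^sup>2)
      = (\<Sum>\<sigma>\<in>P. (cmod (p \<sigma>))\<^sup>2 * (\<Sum>(k,d)\<in>KD N. 1 / real d * W1 N \<sigma> k d x))"
    by (simp add: sum_distrib_left case_prod_unfold algebra_simps)
  also have "\<dots> \<le> (\<Sum>\<sigma>\<in>P. (cmod (p \<sigma>))\<^sup>2 * pi)"
    by (intro sum_mono mult_left_mono W1_sum) (auto simp: P_def)
  also have "(\<Sum>\<sigma>\<in>P. \<Sum>(k,d)\<in>KD N. 1 / real d * W2 N (cyc k d \<circ> \<sigma>) k d x * (cmod (p (cyc k d \<circ> \<sigma>)))\<^sup>2)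
      = (\<Sum>(k,d)\<in>KD N. \<Sum>\<sigma>\<in>P. 1 / real d * W2 N (cyc k d \<circ> \<sigma>) k d x * (cmod (p (cyc k d \<circ> \<sigma>)))\<^sup>2)"
    unfolding case_prod_unfold by (rule sum.swap)
  also have "\<dots> = (\<Sum>(k,d)\<in>KD N. \<Sum>\<tau>\<in>P. 1 / real d * W2 N \<tau> k d x * (cmod (p \<tau>))\<^sup>2)"
    unfolding P_def by (rule sum.cong[OF refl], clarify, rule reindex_cyc[where G="\<lambda>\<tau>. _ * W2 N \<tau> _ _ x * (cmod (p \<tau>))\<^sup>2"])
  also have "\<dots> = (\<Sum>\<tau>\<in>P. (cmod (p \<tau>))\<^sup>2 * (\<Sum>(k,d)\<in>KD N. 1 / real d * W2 N \<tau> k d x))"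
    unfolding case_prod_unfold by (subst sum.swap) (simp add: sum_distrib_left algebra_simps)
  also have "\<dots> \<le> (\<Sum>\<tau>\<in>P. (cmod (p \<tau>))\<^sup>2 * pi)"
    by (intro sum_mono mult_left_mono W2_sum) (auto simp: P_def)
  finally show ?thesis by (simp add: P_def sum_distrib_left sum_distrib_right algebra_simps)
qed

lemma summable_on_sum_fin:
  fixes f :: "'i \<Rightarrow> 'a \<Rightarrow> 'b::{topological_comm_monoid_add}"
  assumes "finite I" "\<And>i. i \<in> I \<Longrightarrow> f i summable_on A"
  shows "(\<lambda>x. \<Sum>i\<in>I. f i x) summable_on A"
  using assms
proof (induction I rule: finite_induct)
  case empty then show ?case by simp
next
  case (insert a I)
  then show ?case by (simp add: summable_on_add)
qed

lemma infsum_sum_fin: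
  fixes f :: "'i \<Rightarrow> 'a \<Rightarrow> 'b::{topological_comm_monoid_add, t2_space}"
  assumes "finite I" "\<And>i. i \<in> I \<Longrightarrow> f i summable_on A"
  shows "infsum (\<lambda>x. \<Sum>i\<in>I. f i x) A = (\<Sum>i\<in>I. infsum (f i) A)"
  using assms
proof (induction I rule: finite_induct)
  case empty then show ?case by simp
next
  case (insert a I)
  have "infsum (\<lambda>x. \<Sum>i\<in>insert a I. f i x) A = infsum (\<lambda>x. f a x + (\<Sum>i\<in>I. f i x)) A"
    using insert by simp
  also have "\<dots> = infsum (f a) A + infsum (\<lambda>x. \<Sum>i\<in>I. f i x) A"
    using insert by (intro infsum_add summable_on_sum_fin) auto
  finally show ?case using insert by simp
qed

lemma summable_on_diff':
  fixes f g :: "'a \<Rightarrow> 'b::{topological_ab_group_add}"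
  assumes "f summable_on A" "g summable_on A"
  shows "(\<lambda>x. f x - g x) summable_on A"
proof -
  have "(\<lambda>x. f x + - g x) summable_on A"
    using assms by (intro summable_on_add) (auto simp: summable_on_uminus)
  then show ?thesis by simp
qed

lemma infsum_diff':
  fixes f g :: "'a \<Rightarrow> 'b::{topological_ab_group_add, t2_space}"
  assumes "f summable_on A" "g summable_on A"
  shows "infsum (\<lambda>x. f x - g x) A = infsum f A - infsum g A"
proof -
  have "infsum (\<lambda>x. f x + - g x) A = infsum f A + infsum (\<lambda>x. - g x) A"
    using assms by (intro infsum_add) (auto simp: summable_on_uminus)
  then show ?thesis by (simp add: infsum_uminus)
qed

lemma ell2_iff: "f \<in> ell2 \<longleftrightarrow> (\<lambda>x. (cmod (f x))\<^sup>2) summable_on UNIV"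
  by (simp add: ell2_def)

lemma ket0_ell2: "ket0 \<in> ell2"
proof -
  have "((\<lambda>x. (cmod (ket0 x))\<^sup>2) has_sum 1) UNIV"
    by (rule has_sum_finite_neutralI[where B="{(0,0,0)}"]) (auto simp: ket0_def)
  then show ?thesis unfolding ell2_iff by (auto simp: summable_on_def)
qed

lemma ipl2_ket0: "ipl2 ket0 ket0 = 1"
proof -
  have "((\<lambda>x. cnj (ket0 x) * ket0 x) has_sum 1) UNIV"
    by (rule has_sum_finite_neutralI[where B="{(0,0,0)}"]) (auto simp: ket0_def)
  then show ?thesis unfolding ipl2_def by (rule infsumI)
qed

lemma phase_ell2: "f \<in> ell2 \<Longrightarrow> phase_op N \<sigma> f \<in> ell2"
  unfolding ell2_iff phase_sg by (simp add: norm_mult cmod_sg)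

lemma ipl2_phase: "ipl2 (phase_op N \<sigma> f) (phase_op N \<sigma> f) = ipl2 f f"
proof -
  have "cnj (sg N \<sigma> x * f x) * (sg N \<sigma> x * f x) = cnj (f x) * f x" for x
  proof -
    have "sg N \<sigma> x * sg N \<sigma> x = 1" by (simp add: sg_def split: prod.splits)
    then show ?thesis by (simp add: cnj_sg algebra_simps)
  qed
  then show ?thesis unfolding ipl2_def phase_sg by (simp only:)
qed

lemma ipl2_summable:
  assumes "f \<in> ell2" "g \<in> ell2"
  shows "(\<lambda>x. cnj (f x) * g x) summable_on UNIV"
proof -
  have s: "(\<lambda>x. (cmod (f x))\<^sup>2 + (cmod (g x))\<^sup>2) summable_on UNIV"
    using assms unfolding ell2_iff by (rule summable_on_add)
  have "(\<lambda>x. norm (cnj (f x) * g x)) summable_on UNIV"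
  proof (rule summable_on_comparison_test[OF s])
    fix x
    have "2 * (cmod (f x) * cmod (g x)) \<le> (cmod (f x))\<^sup>2 + (cmod (g x))\<^sup>2"
      using sum_squares_bound[of "cmod (f x)" "cmod (g x)"] by (simp add: power2_eq_square algebra_simps)
    then show "norm (cnj (f x) * g x) \<le> (cmod (f x))\<^sup>2 + (cmod (g x))\<^sup>2"
      by (simp add: norm_mult) (smt (verit) mult_nonneg_nonneg norm_ge_zero)
  qed auto
  then show ?thesis by (rule abs_summable_summable)
qed

lemma ipl2_norm:
  assumes "f \<in> ell2"
  shows "Re (ipl2 f f) = infsum (\<lambda>x. (cmod (f x))\<^sup>2) UNIV"
proof -
  have "Re (ipl2 f f) = infsum (\<lambda>x. Re (cnj (f x) * f x)) UNIV"
    unfolding ipl2_def by (rule infsum_Re[symmetric], rule ipl2_summable[OF assms assms])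
  also have "\<dots> = infsum (\<lambda>x. (cmod (f x))\<^sup>2) UNIV"
    by (rule infsum_cong) (simp add: cmod_power2 flip: power2_eq_square)
  finally show ?thesis .
qed

lemma psi_0: "psi N U \<sigma> 0 = U ket0" by (simp add: psi_def)
lemma psi_Suc: "psi N U \<sigma> (Suc j) = U (phase_op N \<sigma> (psi N U \<sigma> j))" by (simp add: psi_def)

lemma psi_ell2:
  assumes "unitary_op U"
  shows "psi N U \<sigma> j \<in> ell2"
proof (induction j)
  case 0 then show ?case using assms ket0_ell2 by (simp add: psi_0 unitary_op_def)
next
  case (Suc j) then show ?case using assms phase_ell2 by (simp add: psi_Suc unitary_op_def)
qed

lemma psi_norm:
  assumes "unitary_op U"
  shows "ipl2 (psi N U \<sigma> j) (psi N U \<sigma> j) = 1"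
proof (induction j)
  case 0 then show ?case using assms ket0_ell2 ipl2_ket0 by (simp add: psi_0 unitary_op_def)
next
  case (Suc j)
  have "phase_op N \<sigma> (psi N U \<sigma> j) \<in> ell2" by (rule phase_ell2[OF psi_ell2[OF assms]])
  then show ?case using assms Suc ipl2_phase by (simp add: psi_Suc unitary_op_def)
qed

lemma psi_sumsq:
  assumes "unitary_op U"
  shows "infsum (\<lambda>x. (cmod (psi N U \<sigma> j x))\<^sup>2) UNIV = 1"
  using ipl2_norm[OF psi_ell2[OF assms]] psi_norm[OF assms] by simp

lemma step_diff:
  assumes "unitary_op U"
  shows "ipl2 (psi N U \<sigma> j) (psi N U \<tau> j) - ipl2 (psi N U \<sigma> (Suc j)) (psi N U \<tau> (Suc j))
    = infsum (\<lambda>x. cnj (psi N U \<sigma> j x) * psi N U \<tau> j x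
         - cnj (sg N \<sigma> x * psi N U \<sigma> j x) * (sg N \<tau> x * psi N U \<tau> j x)) UNIV"
proof -
  have e1: "phase_op N \<sigma> (psi N U \<sigma> j) \<in> ell2" "phase_op N \<tau> (psi N U \<tau> j) \<in> ell2"
    using phase_ell2 psi_ell2[OF assms] by auto
  have "ipl2 (psi N U \<sigma> (Suc j)) (psi N U \<tau> (Suc j))
      = ipl2 (phase_op N \<sigma> (psi N U \<sigma> j)) (phase_op N \<tau> (psi N U \<tau> j))"
    using assms e1 by (simp add: psi_Suc unitary_op_def)
  also have "\<dots> = infsum (\<lambda>x. cnj (sg N \<sigma> x * psi N U \<sigma> j x) * (sg N \<tau> x * psi N U \<tau> j x)) UNIV"
    unfolding ipl2_def phase_sg ..
  finally have a: "ipl2 (psi N U \<sigma> (Suc j)) (psi N U \<tau> (Suc j)) = \<dots>" .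
  have s1: "(\<lambda>x. cnj (psi N U \<sigma> j x) * psi N U \<tau> j x) summable_on UNIV"
    using psi_ell2[OF assms] by (intro ipl2_summable)
  have s2: "(\<lambda>x. cnj (sg N \<sigma> x * psi N U \<sigma> j x) * (sg N \<tau> x * psi N U \<tau> j x)) summable_on UNIV"
    using ipl2_summable[OF e1] unfolding phase_sg .
  show ?thesis unfolding a using infsum_diff'[OF s1 s2] by (simp add: ipl2_def)
qed

theorem lemma5:
  fixes N T j :: nat and U :: "qstate \<Rightarrow> qstate"
  assumes "N \<ge> 2" and "T \<ge> 1" and "unitary_op U" and "j < T"
  shows "cmod (Wsum N U j - Wsum N U (Suc j)) \<le> 2 * pi * fact N"
proof -
  note U = assms(3)
  define P where "P = perms N"
  have finP: "finite P" unfolding P_def by (rule perms_finite)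
  have cardP: "card P = fact N" unfolding P_def perms_def by (rule card_permutations) auto
  define h where "h \<sigma> \<tau> x = cnj (psi N U \<sigma> j x) * psi N U \<tau> j x
         - cnj (sg N \<sigma> x * psi N U \<sigma> j x) * (sg N \<tau> x * psi N U \<tau> j x)" for \<sigma> \<tau> x
  have hs: "h \<sigma> \<tau> summable_on UNIV" for \<sigma> \<tau>
  proof -
    have e1: "phase_op N \<sigma> (psi N U \<sigma> j) \<in> ell2" "phase_op N \<tau> (psi N U \<tau> j) \<in> ell2"
      using phase_ell2 psi_ell2[OF U] by auto
    show ?thesis unfolding h_def
      using ipl2_summable[OF e1] ipl2_summable[OF psi_ell2[OF U] psi_ell2[OF U]]
      unfolding phase_sg by (intro summable_on_diff') auto
  qed
  define H where "H x = (\<Sum>\<sigma>\<in>P. \<Sum>\<tau>\<in>P. complex_of_real (omega N \<sigma> \<tau>) * h \<sigma> \<tau> x)" for x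
  define G where "G x = 2 * pi * (\<Sum>\<sigma>\<in>P. (cmod (psi N U \<sigma> j x))\<^sup>2)" for x
  have HG: "norm (H x) \<le> G x" for x
    unfolding H_def G_def h_def P_def by (rule pointwise)
  have Gs: "G summable_on UNIV"
    unfolding G_def using psi_ell2[OF U] unfolding ell2_iff
    by (intro summable_on_cmult_right summable_on_sum_fin finP) auto
  have Gsum: "infsum G UNIV = 2 * pi * fact N"
  proof -
    have "infsum G UNIV = 2 * pi * infsum (\<lambda>x. \<Sum>\<sigma>\<in>P. (cmod (psi N U \<sigma> j x))\<^sup>2) UNIV"
      unfolding G_def by (rule infsum_cmult_right) (use psi_ell2[OF U] in \<open>auto simp: ell2_iff intro!: summable_on_sum_fin finP\<close>)
    also have "infsum (\<lambda>x. \<Sum>\<sigma>\<in>P. (cmod (psi N U \<sigma> j x))\<^sup>2) UNIV = (\<Sum>\<sigma>\<in>P. infsum (\<lambda>x. (cmod (psi N U \<sigma> j x))\<^sup>2) UNIV)"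
      by (rule infsum_sum_fin[OF finP]) (use psi_ell2[OF U] in \<open>auto simp: ell2_iff\<close>)
    also have "\<dots> = of_nat (card P)" by (simp add: psi_sumsq[OF U])
    finally show ?thesis using cardP by simp
  qed
  have Hs: "H summable_on UNIV"
    unfolding H_def using hs
    by (intro summable_on_sum_fin finP summable_on_cmult_right) auto
  have Habs: "(\<lambda>x. norm (H x)) summable_on UNIV"
    by (rule summable_on_comparison_test[OF Gs]) (auto simp: HG)
  have "Wsum N U j - Wsum N U (Suc j)
      = (\<Sum>\<sigma>\<in>P. \<Sum>\<tau>\<in>P. complex_of_real (omega N \<sigma> \<tau>) *
           (ipl2 (psi N U \<sigma> j) (psi N U \<tau> j) - ipl2 (psi N U \<sigma> (Suc j)) (psi N U \<tau> (Suc j))))"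
    unfolding Wsum_def P_def by (simp add: sum_subtractf right_diff_distrib)
  also have "\<dots> = (\<Sum>\<sigma>\<in>P. \<Sum>\<tau>\<in>P. complex_of_real (omega N \<sigma> \<tau>) * infsum (h \<sigma> \<tau>) UNIV)"
    unfolding h_def by (simp only: step_diff[OF U])
  also have "\<dots> = (\<Sum>\<sigma>\<in>P. \<Sum>\<tau>\<in>P. infsum (\<lambda>x. complex_of_real (omega N \<sigma> \<tau>) * h \<sigma> \<tau> x) UNIV)"
    by (simp add: infsum_cmult_right hs)
  also have "\<dots> = (\<Sum>\<sigma>\<in>P. infsum (\<lambda>x. \<Sum>\<tau>\<in>P. complex_of_real (omega N \<sigma> \<tau>) * h \<sigma> \<tau> x) UNIV)"
    by (rule sum.cong[OF refl], rule infsum_sum_fin[OF finP, symmetric]) (auto intro: summable_on_cmult_right hs)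
  also have "\<dots> = infsum H UNIV"
    unfolding H_def
    by (rule infsum_sum_fin[OF finP, symmetric]) (auto intro!: summable_on_sum_fin finP summable_on_cmult_right hs)
  finally have eq: "Wsum N U j - Wsum N U (Suc j) = infsum H UNIV" .
  have "cmod (infsum H UNIV) \<le> infsum (\<lambda>x. norm (H x)) UNIV"
    by (rule norm_infsum_bound) (use Habs in simp)
  also have "\<dots> \<le> infsum G UNIV"
    by (rule infsum_mono[OF Habs Gs HG])
  finally show ?thesis using eq Gsum by simp
qed

end
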